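(* Let $G$ be a graph. For each vertex $v$ let $\mathrm{BFS}(v)$ be a breadth-first search tree of $G$ rooted at $v$ and let $\ell(v)$ be the number of leaves of $\mathrm{BFS}(v)$. Then $\mathrm{gp}(G)\le 1+\min\{\ell(v) : v \text{ is a gp-vertex of } G\}$.
   Context: All graphs are finite, simple and connected. A geodesic is a shortest path. A set $S$ of vertices is a general position set of $G$ if no three vertices of $S$ lie on a common geodesic of $G$; $\mathrm{gp}(G)$ is the maximum cardinality of a general position set, and a general position set of that cardinality is a gp-set. A gp-vertex of $G$ is a vertex lying in at least one gp-set of $G$. *)

theory Defs
  imports Main
begin

definition walk :: "'a set \<Rightarrow> ('a \<Rightarrow> 'a \<Rightarrow> bool) \<Rightarrow> 'a list \<Rightarrow> bool" where
  "walk V E xs \<longleftrightarrow> xs \<noteq> [] \<and> set xs \<subseteq> V \<and> (\<forall>i. Suc i < length xs \<longrightarrow> E (xs ! i) (xs ! Suc i))"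

definition graph :: "'a set \<Rightarrow> ('a \<Rightarrow> 'a \<Rightarrow> bool) \<Rightarrow> bool" where
  "graph V E \<longleftrightarrow> finite V \<and> V \<noteq> {} \<and>
     (\<forall>x y. E x y \<longrightarrow> x \<in> V \<and> y \<in> V) \<and>
     (\<forall>x y. E x y \<longrightarrow> E y x) \<and> (\<forall>x. \<not> E x x) \<and>
     (\<forall>u\<in>V. \<forall>v\<in>V. \<exists>xs. walk V E xs \<and> hd xs = u \<and> last xs = v)"

definition dist :: "'a set \<Rightarrow> ('a \<Rightarrow> 'a \<Rightarrow> bool) \<Rightarrow> 'a \<Rightarrow> 'a \<Rightarrow> nat" where
  "dist V E u v = (LEAST n. \<exists>xs. walk V E xs \<and> hd xs = u \<and> last xs = v \<and> length xs = Suc n)"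

definition geodesic :: "'a set \<Rightarrow> ('a \<Rightarrow> 'a \<Rightarrow> bool) \<Rightarrow> 'a list \<Rightarrow> bool" where
  "geodesic V E xs \<longleftrightarrow> walk V E xs \<and> length xs = Suc (dist V E (hd xs) (last xs))"

definition gp_set :: "'a set \<Rightarrow> ('a \<Rightarrow> 'a \<Rightarrow> bool) \<Rightarrow> 'a set \<Rightarrow> bool" where
  "gp_set V E S \<longleftrightarrow> S \<subseteq> V \<and>
     (\<forall>x\<in>S. \<forall>y\<in>S. \<forall>z\<in>S. x \<noteq> y \<and> y \<noteq> z \<and> x \<noteq> z \<longrightarrow>
        \<not> (\<exists>P. geodesic V E P \<and> x \<in> set P \<and> y \<in> set P \<and> z \<in> set P))"

definition gp :: "'a set \<Rightarrow> ('a \<Rightarrow> 'a \<Rightarrow> bool) \<Rightarrow> nat" where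
  "gp V E = Max (card ` {S. gp_set V E S})"

definition gp_vertex :: "'a set \<Rightarrow> ('a \<Rightarrow> 'a \<Rightarrow> bool) \<Rightarrow> 'a \<Rightarrow> bool" where
  "gp_vertex V E v \<longleftrightarrow> (\<exists>S. gp_set V E S \<and> card S = gp V E \<and> v \<in> S)"

text \<open>A BFS run from v is recorded by its visiting order sigma
  (a list of all vertices, starting with v). The parent of a vertex u \<noteq> v in the BFS
  tree is its earliest-visited neighbour. A list is a BFS visiting order iff it starts at v,
  enumerates V without repetition, every later vertex has an earlier neighbour, and
  vertices (other than v) are visited in nondecreasing order of the position of their
  parent (FIFO queue discipline).\<close>

definition first_nbr_pos :: "('a \<Rightarrow> 'a \<Rightarrow> bool) \<Rightarrow> 'a list \<Rightarrow> 'a \<Rightarrow> nat" where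
  "first_nbr_pos E \<sigma> u = (LEAST i. i < length \<sigma> \<and> E (\<sigma> ! i) u)"

definition bfs_parent :: "('a \<Rightarrow> 'a \<Rightarrow> bool) \<Rightarrow> 'a list \<Rightarrow> 'a \<Rightarrow> 'a" where
  "bfs_parent E \<sigma> u = \<sigma> ! first_nbr_pos E \<sigma> u"

definition bfs_order :: "'a set \<Rightarrow> ('a \<Rightarrow> 'a \<Rightarrow> bool) \<Rightarrow> 'a \<Rightarrow> 'a list \<Rightarrow> bool" where
  "bfs_order V E v \<sigma> \<longleftrightarrow> distinct \<sigma> \<and> set \<sigma> = V \<and> \<sigma> \<noteq> [] \<and> hd \<sigma> = v \<and>
     (\<forall>j. 0 < j \<and> j < length \<sigma> \<longrightarrow> (\<exists>i<j. E (\<sigma> ! i) (\<sigma> ! j))) \<and>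
     (\<forall>j k. 0 < j \<and> j < k \<and> k < length \<sigma> \<longrightarrow>
        first_nbr_pos E \<sigma> (\<sigma> ! j) \<le> first_nbr_pos E \<sigma> (\<sigma> ! k))"

definition bfs_leaves :: "('a \<Rightarrow> 'a \<Rightarrow> bool) \<Rightarrow> 'a list \<Rightarrow> 'a set" where
  "bfs_leaves E \<sigma> = {u \<in> set \<sigma>. u \<noteq> hd \<sigma> \<and>
      \<not> (\<exists>w\<in>set \<sigma>. w \<noteq> hd \<sigma> \<and> bfs_parent E \<sigma> w = u)}"

end

theory Submission imports Defs begin

function hp :: "('a \<Rightarrow> 'a \<Rightarrow> bool) \<Rightarrow> 'a list \<Rightarrow> nat \<Rightarrow> nat" where
  "hp E s k = (if k = 0 then 0 else if first_nbr_pos E s (s!k) < k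
      then Suc (hp E s (first_nbr_pos E s (s!k))) else 0)"
  by pat_completeness auto
termination by (relation "measure (\<lambda>(E,s,k). k)") auto

function tp :: "('a \<Rightarrow> 'a \<Rightarrow> bool) \<Rightarrow> 'a list \<Rightarrow> nat \<Rightarrow> 'a list" where
  "tp E s k = (if k = 0 then [s!0] else if first_nbr_pos E s (s!k) < k
      then tp E s (first_nbr_pos E s (s!k)) @ [s!k] else [s!k])"
  by pat_completeness auto
termination by (relation "measure (\<lambda>(E,s,k). k)") auto

declare hp.simps[simp del] tp.simps[simp del]

lemma hp0[simp]: "hp E s 0 = 0" by (subst hp.simps) simp
lemma tp0[simp]: "tp E s 0 = [s!0]" by (subst tp.simps) simp

locale bfs =
  fixes V E v s
  assumes G: "graph V E" and B: "bfs_order V E v s"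
begin

abbreviation "f k \<equiv> first_nbr_pos E s (s!k)"
abbreviation "n \<equiv> length s"

lemma dist_s: "distinct s" and set_s: "set s = V" and ne: "s \<noteq> []" and hd_s: "hd s = v"
  using B unfolding bfs_order_def by auto

lemma s0: "s!0 = v" using ne hd_s by (simp add: hd_conv_nth)

lemma F1: assumes "0 < k" "k < n" shows "f k < k" "E (s ! f k) (s!k)"
proof -
  obtain i where i: "i < k" "E (s!i) (s!k)" using B assms unfolding bfs_order_def by blast
  have "f k \<le> i" unfolding first_nbr_pos_def using i assms by (intro Least_le) simp
  then show "f k < k" using i by simp
  have "f k < n \<and> E (s ! f k) (s!k)" unfolding first_nbr_pos_def
    by (rule LeastI[of _ i]) (use i assms in simp)
  then show "E (s ! f k) (s!k)" by simp
qed

lemma F2: "0 < j \<Longrightarrow> j < k \<Longrightarrow> k < n \<Longrightarrow> f j \<le> f k"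
  using B unfolding bfs_order_def by blast

lemma F3: "i < n \<Longrightarrow> E (s!i) (s!k) \<Longrightarrow> f k \<le> i"
  unfolding first_nbr_pos_def by (intro Least_le) simp

lemma hp_mono: "k < n \<Longrightarrow> j \<le> k \<Longrightarrow> hp E s j \<le> hp E s k"
proof (induction k arbitrary: j rule: less_induct)
  case (less k)
  show ?case
  proof (cases "j = 0 \<or> j = k")
    case True then show ?thesis by auto
  next
    case False
    then have j: "0 < j" "j < k" using less by auto
    have a: "f j < j" "f k < k" using F1 j less by auto
    have "f j \<le> f k" using F2 j less by auto
    then have "hp E s (f j) \<le> hp E s (f k)" using less a j by auto
    then show ?thesis using a j by (subst (1 2) hp.simps) auto
  qed
qed

lemma hp_edge: assumes "a < n" "b < n" "E (s!a) (s!b)" shows "hp E s b \<le> Suc (hp E s a)"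
proof (cases "b = 0")
  case True then show ?thesis by simp
next
  case False
  show ?thesis
  proof (cases "a < b")
    case True
    have "f b \<le> a" using F3 assms by auto
    then have "hp E s (f b) \<le> hp E s a" using hp_mono assms by auto
    moreover have "f b < b" using F1 False assms by auto
    ultimately show ?thesis using False by (subst hp.simps) auto
  next
    case False
    then show ?thesis using hp_mono[of a b] assms by auto
  qed
qed

lemma walk_lb: assumes "walk V E xs" "hd xs = v"
  shows "i < length xs \<Longrightarrow> \<exists>k<n. s!k = xs!i \<and> hp E s k \<le> i"
proof (induction i)
  case 0 then show ?case using assms ne s0 by (intro exI[of _ 0]) (auto simp: hd_conv_nth walk_def)
next
  case (Suc i)
  then obtain k where k: "k<n" "s!k = xs!i" "hp E s k \<le> i" by auto
  have "xs!Suc i \<in> V" using assms(1) Suc.prems unfolding walk_def by auto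
  then obtain m where m: "m < n" "s!m = xs!Suc i" using set_s by (metis in_set_conv_nth)
  have "E (xs!i) (xs!Suc i)" using assms(1) Suc.prems unfolding walk_def by auto
  then have "hp E s m \<le> Suc (hp E s k)" using hp_edge k m by auto
  then show ?case using m k by auto
qed

lemma tp_props: "k < n \<Longrightarrow> walk V E (tp E s k) \<and> hd (tp E s k) = v \<and> last (tp E s k) = s!k
   \<and> length (tp E s k) = Suc (hp E s k) \<and> set (tp E s k) \<subseteq> {s!j | j. j \<le> k}"
proof (induction k rule: less_induct)
  case (less k)
  show ?case
  proof (cases "k = 0")
    case True
    then show ?thesis using s0 less set_s ne by (auto simp: walk_def)
  next
    case False
    have a: "f k < k" "E (s ! f k) (s!k)" using F1 False less by auto
    note IH = less.IH[OF a(1)] 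
    have IH': "walk V E (tp E s (f k)) \<and> hd (tp E s (f k)) = v \<and> last (tp E s (f k)) = s!(f k)
   \<and> length (tp E s (f k)) = Suc (hp E s (f k)) \<and> set (tp E s (f k)) \<subseteq> {s!j | j. j \<le> f k}"
      using IH a less by auto
    have tk: "tp E s k = tp E s (f k) @ [s!k]" using False a by (subst tp.simps) auto
    have hk: "hp E s k = Suc (hp E s (f k))" using False a by (subst hp.simps) auto
    have ne': "tp E s (f k) \<noteq> []" using IH' by (auto simp: walk_def)
    have w: "walk V E (tp E s (f k) @ [s!k])"
      unfolding walk_def
    proof (intro conjI allI impI)
      show "set (tp E s (f k) @ [s ! k]) \<subseteq> V" using IH' less set_s by (auto simp: walk_def)
      fix i assume i: "Suc i < length (tp E s (f k) @ [s ! k])"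
      show "E ((tp E s (f k) @ [s ! k]) ! i) ((tp E s (f k) @ [s ! k]) ! Suc i)"
      proof (cases "Suc i < length (tp E s (f k))")
        case True then show ?thesis using IH' by (auto simp: walk_def nth_append)
      next
        case False
        then have "i = length (tp E s (f k)) - 1" using i by auto
        then show ?thesis using IH' ne' a False by (auto simp: nth_append last_conv_nth)
      qed
    qed simp
    have sub: "set (tp E s (f k)) \<subseteq> {s!j | j. j \<le> k}" using IH' a by fastforce
    show ?thesis using tk hk w IH' ne' a less sub by (auto simp: hd_append)
  qed
qed

lemma dist_tp: assumes "k < n" shows "dist V E v (s!k) = hp E s k"
proof -
  let ?P = "\<lambda>m. \<exists>xs. walk V E xs \<and> hd xs = v \<and> last xs = s!k \<and> length xs = Suc m"
  have P: "?P (hp E s k)" using tp_props[OF assms] by blast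
  have le: "dist V E v (s!k) \<le> hp E s k" unfolding dist_def by (rule Least_le) (rule P)
  have "?P (dist V E v (s!k))" unfolding dist_def by (rule LeastI[of _ "hp E s k"]) (rule P)
  then obtain xs where xs: "walk V E xs" "hd xs = v" "last xs = s!k" "length xs = Suc (dist V E v (s!k))" by blast
  then have xne: "xs \<noteq> []" by (auto simp: walk_def)
  obtain m where m: "m < n" "s!m = xs!(length xs - 1)" "hp E s m \<le> length xs - 1"
    using walk_lb[OF xs(1,2), of "length xs - 1"] xne by auto
  have "s!m = s!k" using m xs xne by (simp add: last_conv_nth)
  then have "m = k" using dist_s m assms by (simp add: nth_eq_iff_index_eq)
  then show ?thesis using m xs le by auto
qed

lemma tp_geo: "k < n \<Longrightarrow> geodesic V E (tp E s k)"
  using tp_props dist_tp unfolding geodesic_def by auto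

lemma leaf_exists: assumes "0 < i" "i < n"
  shows "\<exists>k<n. s!i \<in> set (tp E s k) \<and> s!k \<in> bfs_leaves E s"
proof -
  let ?D = "{k. k < n \<and> s!i \<in> set (tp E s k)}"
  have "i \<in> ?D" using tp_props[OF assms(2)] assms last_in_set by (metis (mono_tags, lifting) mem_Collect_eq walk_def)
  have fin: "finite ?D" by auto
  obtain k where k: "k \<in> ?D" "\<forall>m\<in>?D. m \<le> k"
    using Max_in[OF fin] Max_ge[OF fin] \<open>i \<in> ?D\<close> by blast
  have "s!i \<in> {s!j | j. j \<le> k}" using tp_props[of k] k by auto
  then obtain j where j: "j \<le> k" "s!i = s!j" by auto
  then have "i = j" using dist_s assms k by (simp add: nth_eq_iff_index_eq)
  then have k0: "0 < k" using j assms by auto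
  have "s!k \<in> bfs_leaves E s" unfolding bfs_leaves_def
  proof (safe)
    show "s!k \<in> set s" using k by auto
    show "s!k = hd s \<Longrightarrow> False" using k0 k dist_s ne
      by (simp add: hd_conv_nth nth_eq_iff_index_eq)
    fix w assume w: "w \<in> set s" "w \<noteq> hd s" "bfs_parent E s w = s!k"
    obtain m where m: "m < n" "s!m = w" using w by (metis in_set_conv_nth)
    have m0: "0 < m" using m w ne by (metis gr0I hd_conv_nth)
    have a: "f m < m" using F1 m0 m by auto
    have "s ! f m = s!k" using w m unfolding bfs_parent_def by auto
    then have fm: "f m = k" using dist_s a m k by (simp add: nth_eq_iff_index_eq)
    have "tp E s m = tp E s k @ [s!m]" using m0 a fm by (subst tp.simps) auto
    then have "m \<in> ?D" using k m by auto
    then show False using k a fm by auto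
  qed
  then show ?thesis using k by auto
qed

lemma main: assumes "gp_set V E S" "v \<in> S" shows "card S \<le> 1 + card (bfs_leaves E s)"
proof -
  have SV: "S \<subseteq> V" using assms unfolding gp_set_def by auto
  have "\<forall>u\<in>S - {v}. \<exists>k<n. u \<in> set (tp E s k) \<and> s!k \<in> bfs_leaves E s"
  proof
    fix u assume u: "u \<in> S - {v}"
    then obtain i where i: "i < n" "s!i = u" using SV set_s by (metis Diff_iff in_set_conv_nth subsetD)
    have "i \<noteq> 0" using i u s0 by force
    then show "\<exists>k<n. u \<in> set (tp E s k) \<and> s!k \<in> bfs_leaves E s" using leaf_exists i by auto
  qed
  then obtain g where g: "\<And>u. u \<in> S - {v} \<Longrightarrow> g u < n \<and> u \<in> set (tp E s (g u)) \<and> s!(g u) \<in> bfs_leaves E s"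
    by metis
  have inj: "inj_on (\<lambda>u. s!(g u)) (S - {v})"
  proof (rule inj_onI, rule ccontr)
    fix x y assume x: "x \<in> S - {v}" and y: "y \<in> S - {v}" and e: "s!(g x) = s!(g y)" and xy: "x \<noteq> y"
    have "g x = g y" using e g x y dist_s by (simp add: nth_eq_iff_index_eq)
    then have "geodesic V E (tp E s (g x)) \<and> x \<in> set (tp E s (g x)) \<and> y \<in> set (tp E s (g x))
       \<and> v \<in> set (tp E s (g x))"
      using g x y tp_geo tp_props[of "g x"] by (metis list.set_sel(1) walk_def)
    then show False using assms x y xy unfolding gp_set_def by blast
  qed
  have "card (S - {v}) \<le> card (bfs_leaves E s)"
  proof (rule card_inj_on_le[OF inj])
    show "(\<lambda>u. s ! g u) ` (S - {v}) \<subseteq> bfs_leaves E s" using g by blast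
    show "finite (bfs_leaves E s)" unfolding bfs_leaves_def by auto
  qed
  moreover have "finite S" using SV G finite_subset unfolding graph_def by auto
  ultimately show ?thesis using assms by (simp add: card_Diff_singleton)
qed

end

theorem corollary3p4:
  fixes V :: "'a set" and E :: "'a \<Rightarrow> 'a \<Rightarrow> bool" and \<sigma> :: "'a \<Rightarrow> 'a list"
  assumes "graph V E"
    and "\<forall>v\<in>V. bfs_order V E v (\<sigma> v)"
  shows "gp V E \<le> 1 + Min {card (bfs_leaves E (\<sigma> v)) | v. gp_vertex V E v}"
proof -
  have fV: "finite V" using assms(1) unfolding graph_def by (rule conjunct1)
  have key: "gp_vertex V E v \<Longrightarrow> gp V E \<le> 1 + card (bfs_leaves E (\<sigma> v))" for v
  proof -
    assume "gp_vertex V E v"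
    then obtain S where S: "gp_set V E S" "card S = gp V E" "v \<in> S" unfolding gp_vertex_def by (elim exE conjE)
    then have vV: "v \<in> V" unfolding gp_set_def by (elim conjE) blast
    have bo: "bfs_order V E v (\<sigma> v)" by (rule bspec[OF assms(2) vV])
    have "card S \<le> 1 + card (bfs_leaves E (\<sigma> v))" by (rule bfs.main[OF bfs.intro[OF assms(1) bo] S(1) S(3)])
    then show ?thesis using S(2) by linarith
  qed
  let ?F = "{S. gp_set V E S}"
  have "?F \<subseteq> Pow V"
  proof
    fix S assume "S \<in> ?F"
    then have "gp_set V E S" by simp
    then have "S \<subseteq> V" unfolding gp_set_def by (rule conjunct1)
    then show "S \<in> Pow V" by simp
  qed
  then have finF: "finite ?F" using fV by (simp add: finite_subset)
  have "{} \<in> ?F" by (simp add: gp_set_def)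
  then have "gp V E \<in> card ` ?F" unfolding gp_def using finF by (intro Max_in) auto
  then obtain S where S: "gp_set V E S" "card S = gp V E" by auto
  show ?thesis
  proof (cases "S = {}")
    case True then show ?thesis using S by simp
  next
    case False
    then obtain w where "w \<in> S" by auto
    then have gw: "gp_vertex V E w" using S unfolding gp_vertex_def by (intro exI[of _ S] conjI)
    let ?M = "{card (bfs_leaves E (\<sigma> v)) | v. gp_vertex V E v}"
    have "?M \<subseteq> (\<lambda>v. card (bfs_leaves E (\<sigma> v))) ` V"
    proof
      fix x assume "x \<in> ?M"
      then obtain v where "x = card (bfs_leaves E (\<sigma> v))" "gp_vertex V E v" by blast
      moreover have "v \<in> V"
      proof -
        obtain T where "gp_set V E T" "v \<in> T" using \<open>gp_vertex V E v\<close> unfolding gp_vertex_def by (elim exE conjE)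
        then show ?thesis unfolding gp_set_def by (elim conjE) blast
      qed
      ultimately show "x \<in> (\<lambda>v. card (bfs_leaves E (\<sigma> v))) ` V" by blast
    qed
    then have finM: "finite ?M" using fV finite_subset by blast
    have "?M \<noteq> {}" using gw by blast
    then have "Min ?M \<in> ?M" using finM by (rule Min_in[rotated])
    then obtain v where "Min ?M = card (bfs_leaves E (\<sigma> v))" "gp_vertex V E v" by blast
    then show ?thesis using key by simp
  qed
qed

end
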